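(* Let $\kappa_1>0$, $\kappa_2>0$ and $C\ge0$. Let $f$ be a nonnegative continuous function on $(0,1]$ such that $\int_0^1 f<+\infty$. Assume that $G:[0,1]\to[0,+\infty)$ is continuous on $[0,1]$, of class $\mathcal{C}^1$ on $(0,1]$, and satisfies on $(0,1]$ the differential inequality $$G'(t)\le Ct^{\kappa_1-1}G(t)+f(t)\sqrt{G(t)}+Ct^{\kappa_2-1},\qquad G(0)=0.$$ Then for all $t\in[0,1]$, $$G(t)\lesssim\Big(\int_0^t f\Big)^2+t^{\kappa_2},$$ where the implicit constant depends only on $\kappa_1,\kappa_2,C$. *)

theory Defs
  imports "HOL-Analysis.Analysis"
begin

end

theory Submission
  imports Defs
begin

lemma main_bound:
  fixes k1 k2 C T :: real and f G G' :: "real \<Rightarrow> real"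
  assumes k1: "k1 > 0" and k2: "k2 > 0" and C: "C \<ge> 0"
    and fnn: "\<forall>t\<in>{0<..1}. f t \<ge> 0" and fc: "continuous_on {0<..1} f"
    and fi: "f integrable_on {0..1}"
    and Gc: "continuous_on {0..1} G" and Gnn: "\<forall>t\<in>{0..1}. G t \<ge> 0"
    and Gd: "\<forall>t\<in>{0<..1}. (G has_real_derivative G' t) (at t within {0<..1})"
    and ineq: "\<forall>t\<in>{0<..1}. G' t \<le> C * t powr (k1 - 1) * G t + f t * sqrt (G t) + C * t powr (k2 - 1)"
    and G0: "G 0 = 0"
    and T: "T \<in> {0..1}"
  shows "G T \<le> ((1 + 2 * (C / k2)) / (exp (- C / k1))\<^sup>2) * ((integral {0..T} f)\<^sup>2 + T powr k2)"
proof -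
  define e where "e = exp (- C / k1)"
  define phi where "phi = (\<lambda>s::real. exp (- (C / k1) * s powr k1))"
  define H where "H = (\<lambda>s. phi s * G s)"
  define A where "A = (\<lambda>s. integral {0..s} f)"
  define c where "c = C / k2"
  have e0: "e > 0" "e \<le> 1" unfolding e_def using C k1 by auto
  have phib: "e \<le> phi s \<and> phi s \<le> 1 \<and> phi s > 0" if "s \<in> {0..1}" for s
  proof -
    have "s powr k1 \<le> 1" using that k1 by (simp add: powr_le1)
    moreover have "s powr k1 \<ge> 0" by simp
    ultimately have "C * s powr k1 \<le> C" "C * s powr k1 \<ge> 0" using C by (auto intro: mult_left_le)
    then have "- (C / k1) * s powr k1 \<ge> - C / k1" "- (C / k1) * s powr k1 \<le> 0"
      using C k1 by (auto simp: field_simps)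
    then show ?thesis unfolding phi_def e_def by auto
  qed
  define g where "g = (\<lambda>x. max 0 (f x))"
  have fg: "integral {0..s} f = integral {0..s} g" if "s \<in> {0..1}" for s
    by (rule integral_spike[of "{0}"]) (use that fnn in \<open>auto simp: g_def\<close>)
  have gi: "g integrable_on {0..1}"
    by (rule integrable_spike[OF fi, of "{0}"]) (use fnn in \<open>auto simp: g_def\<close>)
  have A_mono: "0 \<le> A s \<and> A s \<le> A t" if "0 \<le> s" "s \<le> t" "t \<le> 1" for s t
  proof -
    have gs: "g integrable_on {0..s}" "g integrable_on {0..t}"
      using gi that by (auto intro: integrable_subinterval_real)
    have "integral {0..s} g \<le> integral {0..t} g"
      by (rule integral_subset_le) (use that gs in \<open>auto simp: g_def\<close>)
    moreover have "0 \<le> integral {0..s} g" by (rule integral_nonneg) (use gs in \<open>auto simp: g_def\<close>)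
    ultimately show ?thesis unfolding A_def using fg that by auto
  qed
  have A0: "A 0 = 0" unfolding A_def by simp
  have Ac: "continuous_on {0..1} A" unfolding A_def by (rule indefinite_integral_continuous_1[OF fi])
  have Ad: "(A has_real_derivative f z) (at z)" if "0 < z" "z < 1" for z
  proof -
    have "z \<in> interior {0<..1::real}"
      using interior_mono[of "{0<..<1::real}" "{0<..1}"] interior_open[OF open_greaterThanLessThan, of 0 "1::real"] that by auto
    then have "isCont f z"
      using fc continuous_on_interior by blast
    then have "continuous (at z within ({0..1} - {})) f" by (simp add: continuous_at_imp_continuous_at_within)
    from integral_has_vector_derivative_continuous_at[OF fi _ _ this]
    have "(A has_vector_derivative f z) (at z within {0..1})" using that unfolding A_def by auto
    moreover have "at z within {0..1} = at z" using that by (intro at_within_interior) auto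
    ultimately show ?thesis by (simp add: has_real_derivative_iff_has_vector_derivative)
  qed
  have Gda: "(G has_real_derivative G' z) (at z)" if "0 < z" "z < 1" for z
  proof -
    have "(G has_real_derivative G' z) (at z within {0<..<1})"
      by (rule DERIV_subset[of _ _ _ "{0<..1}"]) (use Gd that in auto)
    moreover have "at z within {0<..<1} = at z" using that by (intro at_within_open) auto
    ultimately show ?thesis by simp
  qed
  have phid: "(phi has_real_derivative (phi z * (- (C / k1) * (k1 * z powr (k1 - 1))))) (at z)" if "0 < z" for z
    unfolding phi_def
    by (rule derivative_eq_intros has_real_derivative_powr that refl | simp)+
  have phic: "continuous_on {0..1} phi" unfolding phi_def
    by (intro continuous_intros continuous_on_powr') (use k1 in auto)
  have Hc: "continuous_on {0..1} H" unfolding H_def by (intro continuous_intros phic Gc)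
  have c0: "c \<ge> 0" unfolding c_def using C k2 by simp
  have fA: "integral {0..T} f = A T" unfolding A_def by simp
  have ATnn: "A T \<ge> 0" using A_mono[of T T] T by auto
  have final: "G T \<le> (A T)\<^sup>2 / e\<^sup>2 + 2 * c * T powr k2 / e"
  proof (cases "T = 0")
    case True
    then show ?thesis using G0 A0 by simp
  next
    case False
    then have T0: "0 < T" using T by auto
    have HcT: "continuous_on {0..T} H" using Hc T by (auto intro: continuous_on_subset)
    obtain s0 where s0: "s0 \<in> {0..T}" "\<forall>s\<in>{0..T}. H s \<le> H s0"
      using continuous_attains_sup[OF compact_Icc _ HcT] T0 by auto
    define M where "M = H s0"
    have s01: "s0 \<in> {0..1}" using s0 T by auto
    have M0: "M \<ge> 0" unfolding M_def H_def using phib[OF s01] Gnn s01 by auto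
    have GleM: "G s \<le> M / e" if "s \<in> {0..T}" for s
    proof -
      have s1: "s \<in> {0..1}" using that T by auto
      have "phi s * G s \<le> M" using s0 that unfolding M_def H_def by auto
      moreover have "e * G s \<le> phi s * G s" using phib[OF s1] Gnn s1 by (auto intro: mult_right_mono)
      ultimately have "e * G s \<le> M" by linarith
      then show ?thesis using e0 by (simp add: field_simps)
    qed
    have step: "M \<le> sqrt (M / e) * A s0 + c * s0 powr k2"
    proof (cases "s0 = 0")
      case True
      then show ?thesis unfolding M_def H_def using G0 A0 by simp
    next
      case False
      then have s0p: "0 < s0" using s0 by auto
      define Phi where "Phi = (\<lambda>s. H s - sqrt (M / e) * A s - c * s powr k2)"
      define Phi' where "Phi' = (\<lambda>z. (phi z * (- (C / k1) * (k1 * z powr (k1 - 1)))) * G z + G' z * phi z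
          - sqrt (M / e) * f z - c * (k2 * z powr (k2 - 1)))"
      have Phic: "continuous_on {0..s0} Phi"
      proof -
        have "continuous_on {0..s0} H" "continuous_on {0..s0} A"
          using Hc Ac s01 by (auto intro: continuous_on_subset)
        moreover have "continuous_on {0..s0} (\<lambda>s::real. s powr k2)"
          by (intro continuous_on_powr' continuous_intros) (use k2 in auto)
        ultimately show ?thesis unfolding Phi_def by (intro continuous_on_diff continuous_on_mult_left)
      qed
      have Phid: "(Phi has_real_derivative Phi' z) (at z)" if "0 < z" "z < s0" for z
      proof -
        have z1: "z < 1" using that s01 by auto
        show ?thesis unfolding Phi_def Phi'_def H_def
          by (intro DERIV_diff DERIV_mult DERIV_cmult phid Gda Ad has_real_derivative_powr that z1)
      qed
      obtain l z where z: "0 < z" "z < s0" "DERIV Phi z :> l" "Phi s0 - Phi 0 = (s0 - 0) * l"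
        using MVT[OF s0p Phic] Phid real_differentiable_def by blast
      have lz: "l = Phi' z" using DERIV_unique[OF z(3) Phid[OF z(1,2)]] .
      have zin: "z \<in> {0<..1}" "z \<in> {0..1}" "z \<in> {0..T}" using z s0 s01 by auto
      have Phi'0: "Phi' z \<le> 0"
      proof -
        have ph: "e \<le> phi z" "phi z \<le> 1" "0 < phi z" using phib[OF zin(2)] by auto
        have Gz: "0 \<le> G z" using Gnn zin by auto
        have fz: "0 \<le> f z" using fnn zin by auto
        have i1: "G' z - C * z powr (k1 - 1) * G z \<le> f z * sqrt (G z) + C * z powr (k2 - 1)"
          using bspec[OF ineq zin(1)] by linarith
        have nn: "0 \<le> f z * sqrt (G z) + C * z powr (k2 - 1)" using fz Gz C by auto
        have "phi z * (G' z - C * z powr (k1 - 1) * G z) \<le> phi z * (f z * sqrt (G z) + C * z powr (k2 - 1))"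
          using i1 ph by (auto intro: mult_left_mono)
        also have "\<dots> \<le> f z * sqrt (G z) + C * z powr (k2 - 1)"
          using ph nn by (auto intro: mult_left_le_one_le)
        also have "\<dots> \<le> f z * sqrt (M / e) + C * z powr (k2 - 1)"
          using GleM[OF zin(3)] fz by (auto intro: mult_left_mono)
        finally have X: "phi z * (G' z - C * z powr (k1 - 1) * G z) \<le> f z * sqrt (M / e) + C * z powr (k2 - 1)" .
        have W: "c * (k2 * z powr (k2 - 1)) = C * z powr (k2 - 1)" unfolding c_def using k2 by simp
        have Y: "phi z * (- (C / k1) * (k1 * z powr (k1 - 1))) * G z = - (phi z * (C * z powr (k1 - 1) * G z))"
          using k1 by simp
        have X2: "G' z * phi z - phi z * (C * z powr (k1 - 1) * G z) \<le> f z * sqrt (M / e) + C * z powr (k2 - 1)"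
          using X by (simp only: right_diff_distrib mult.commute)
        show ?thesis unfolding Phi'_def using W Y X2 mult.commute[of "sqrt (M / e)" "f z"] by linarith
      qed
      have "s0 * Phi' z \<le> 0" using Phi'0 s0p by (simp add: mult_nonneg_nonpos)
      then have "Phi s0 \<le> Phi 0" using z(4) lz by simp
      moreover have "Phi 0 = 0" unfolding Phi_def H_def using G0 A0 k2 by simp
      ultimately show ?thesis unfolding Phi_def M_def by simp
    qed
    have As0: "0 \<le> A s0" "A s0 \<le> A T" using A_mono[of s0 T] s0 T by auto
    have pw: "s0 powr k2 \<le> T powr k2" using s0 k2 by (auto intro: powr_mono2)
    define x where "x = sqrt M"
    define a where "a = A s0 / sqrt e"
    have xM: "M = x\<^sup>2" "x \<ge> 0" unfolding x_def using M0 by auto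
    have "sqrt (M / e) * A s0 = x * a" unfolding x_def a_def by (simp add: real_sqrt_divide)
    then have "x\<^sup>2 \<le> x * a + c * s0 powr k2" using step xM by simp
    moreover have "x * a \<le> (x\<^sup>2 + a\<^sup>2) / 2" using zero_le_power2[of "x - a"] unfolding power2_diff by (simp add: field_simps)
    ultimately have M1: "M \<le> a\<^sup>2 + 2 * (c * s0 powr k2)" using xM by simp
    have "a\<^sup>2 = (A s0)\<^sup>2 / e" unfolding a_def using e0 by (simp add: power_divide)
    also have "(A s0)\<^sup>2 / e \<le> (A T)\<^sup>2 / e" using As0 e0 by (auto intro: divide_right_mono power_mono)
    finally have M2: "a\<^sup>2 \<le> (A T)\<^sup>2 / e" .
    have M3: "c * s0 powr k2 \<le> c * T powr k2" using pw c0 by (rule mult_left_mono)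
    have Mle: "M \<le> (A T)\<^sup>2 / e + 2 * (c * T powr k2)" using M1 M2 M3 by linarith
    have "G T \<le> M / e" using GleM T by auto
    also have "\<dots> \<le> ((A T)\<^sup>2 / e + 2 * (c * T powr k2)) / e" using Mle e0 by (auto intro: divide_right_mono)
    also have "\<dots> = (A T)\<^sup>2 / e\<^sup>2 + 2 * c * T powr k2 / e" using e0 by (simp add: field_simps power2_eq_square)
    finally show ?thesis .
  qed
  have "2 * c * T powr k2 / e \<le> 2 * c * T powr k2 / e\<^sup>2"
  proof -
    have "e\<^sup>2 \<le> e" using e0 by (simp add: power2_eq_square mult_left_le_one_le)
    moreover have "0 \<le> 2 * c * T powr k2" using c0 by simp
    ultimately show ?thesis using e0 by (intro divide_left_mono) auto
  qed
  also have "(A T)\<^sup>2 / e\<^sup>2 + 2 * c * T powr k2 / e\<^sup>2 \<le> ((1 + 2 * c) / e\<^sup>2) * ((A T)\<^sup>2 + T powr k2)"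
    using c0 e0 by (simp add: field_simps)
  ultimately show ?thesis using final fA unfolding e_def c_def by simp

qed

theorem lemma2p2:
  fixes \<kappa>1 \<kappa>2 C :: real
  assumes "\<kappa>1 > 0" and "\<kappa>2 > 0" and "C \<ge> 0"
  shows "\<exists>K>0. \<forall>(f :: real \<Rightarrow> real) (G :: real \<Rightarrow> real) (G' :: real \<Rightarrow> real).
    (\<forall>t\<in>{0<..1}. f t \<ge> 0) \<and> continuous_on {0<..1} f \<and> f integrable_on {0..1} \<and>
    continuous_on {0..1} G \<and> (\<forall>t\<in>{0..1}. G t \<ge> 0) \<and>
    (\<forall>t\<in>{0<..1}. (G has_real_derivative G' t) (at t within {0<..1})) \<and>
    continuous_on {0<..1} G' \<and>
    (\<forall>t\<in>{0<..1}. G' t \<le> C * t powr (\<kappa>1 - 1) * G t + f t * sqrt (G t) + C * t powr (\<kappa>2 - 1)) \<and>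
    G 0 = 0
    \<longrightarrow> (\<forall>t\<in>{0..1}. G t \<le> K * ((integral {0..t} f)\<^sup>2 + t powr \<kappa>2))"
proof (intro exI[of _ "(1 + 2 * (C / \<kappa>2)) / (exp (- C / \<kappa>1))\<^sup>2"] conjI allI impI ballI)
  show "0 < (1 + 2 * (C / \<kappa>2)) / (exp (- C / \<kappa>1))\<^sup>2"
    using assms by (intro divide_pos_pos) (auto intro!: add_pos_nonneg)
next
  fix f G G' :: "real \<Rightarrow> real" and t :: real
  assume h: "(\<forall>t\<in>{0<..1}. f t \<ge> 0) \<and> continuous_on {0<..1} f \<and> f integrable_on {0..1} \<and>
    continuous_on {0..1} G \<and> (\<forall>t\<in>{0..1}. G t \<ge> 0) \<and>
    (\<forall>t\<in>{0<..1}. (G has_real_derivative G' t) (at t within {0<..1})) \<and>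
    continuous_on {0<..1} G' \<and>
    (\<forall>t\<in>{0<..1}. G' t \<le> C * t powr (\<kappa>1 - 1) * G t + f t * sqrt (G t) + C * t powr (\<kappa>2 - 1)) \<and>
    G 0 = 0" and t: "t \<in> {0..1}"
  show "G t \<le> (1 + 2 * (C / \<kappa>2)) / (exp (- C / \<kappa>1))\<^sup>2 * ((integral {0..t} f)\<^sup>2 + t powr \<kappa>2)"
    using main_bound[OF assms] h t by blast
qed

end
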